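(* Let $q$ be an odd prime, $n \geq 1$ an integer, $v = 3q^n$, and $k$ an odd positive integer. If there are integers $a_1, \ldots, a_k$ with $1 \leq a_j < v$ such that $\prod_{j=1}^k a_j = \prod_{j=1}^k (v - a_j)$, then there is an integer $m$ such that $2^m \equiv (-1)^{m+1} \pmod q$.
   Context: For a negative integer $m$, $2^m$ is understood in $\mathbb{Z}/q\mathbb{Z}$ as the $|m|$-th power of the multiplicative inverse of $2$ modulo $q$. *)

theory Defs
  imports "HOL-Number_Theory.Number_Theory"
begin

text \<open>For an integer exponent m and odd modulus q, the congruence 2^m = c (mod q) is
  understood in Z/qZ: for m < 0, 2^m is the |m|-th power of the inverse of 2 modulo q,
  so 2^m = c (mod q) iff c * 2^|m| = 1 (mod q).\<close>
definition pow2_int_cong :: "int \<Rightarrow> int \<Rightarrow> int \<Rightarrow> bool" where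
  "pow2_int_cong q m c \<longleftrightarrow>
     (if 0 \<le> m then [2 ^ nat m = c] (mod q) else [c * 2 ^ nat (- m) = 1] (mod q))"

definition neg_one_pow :: "int \<Rightarrow> int" where
  "neg_one_pow e = (if even e then 1 else -1)"

end

theory Submission
  imports Defs
begin

lemma perj:
  fixes q a :: int and n :: nat
  assumes q: "prime q" "odd q" and n: "n \<ge> 1" and a: "1 \<le> a" "a < 3 * q ^ n"
  shows "\<exists>e u w p r z. a = q^e*u \<and> 3*q^n - a = q^e*w \<and> \<not> q dvd u \<and>
           p+r+z = (1::nat) \<and> [w * 2^p = (-1)^z * 2^r * u] (mod q)"
proof -
  have q1: "q > 1" using q prime_gt_1_int by blast
  have nd2: "\<not> q dvd 2"
  proof
    assume "q dvd 2" then have "q \<le> 2" by (rule zdvd_imp_le) simp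
    then have "q = 2" using q1 by linarith
    then show False using q by simp
  qed
  define e where "e = multiplicity q a"
  obtain y where y: "a = q^e * y" "\<not> q dvd y"
  proof -
    have "a \<noteq> 0" using a by simp
    moreover have "\<not> is_unit q" using q(1) not_prime_unit by blast
    ultimately show ?thesis using multiplicity_decompose'[of a q] e_def that by metis
  qed
  show ?thesis
  proof (cases "e < n")
    case True
    have eq: "3*q^n = q^e * (3*q^(n-e))"
      using True by (simp add: power_add[symmetric])
    have "q dvd 3*q^(n-e)" using True by (simp add: dvd_mult)
    then have "[3*q^(n-e) - y = -1 * y] (mod q)"
      by (simp add: cong_iff_dvd_diff)
    then have c: "[(3*q^(n-e) - y) * 2^0 = (-1)^1 * 2^0 * y] (mod q)" by simp
    have "3*q^n - a = q^e * (3*q^(n-e) - y)" using eq y by (simp add: right_diff_distrib)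
    then have "a = q^e*y \<and> 3*q^n - a = q^e*(3*q^(n-e) - y) \<and> \<not> q dvd y \<and>
           0+0+1 = (1::nat) \<and> [(3*q^(n-e) - y) * 2^0 = (-1)^1 * 2^0 * y] (mod q)"
      using y c by simp
    then show ?thesis by blast
  next
    case False
    have "q^n dvd a" using False e_def multiplicity_dvd'[of n q a] by simp
    then obtain c where c: "a = q^n * c" by blast
    have qn: "q^n > 0" using q1 by simp
    have c1: "c \<ge> 1" proof -
      have "q^n * c > 0" using c a by simp
      then have "c > 0" using qn zero_less_mult_pos by blast
      then show ?thesis by linarith
    qed
    have c2: "c < 3" proof -
      have "q^n * c < q^n * 3" using c a by (simp add: mult.commute)
      then show ?thesis using qn by simp
    qed
    consider "c = 1" | "c = 2" using c1 c2 by linarith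
    then show ?thesis
    proof cases
      case 1
      have "3*q^n - a = q^n * 2" using c 1 by simp
      then have "a = q^n*1 \<and> 3*q^n - a = q^n*2 \<and> \<not> q dvd 1 \<and>
           0+1+0 = (1::nat) \<and> [2 * 2^0 = (-1)^0 * 2^1 * 1] (mod q)"
        using c 1 q1 by simp
      then show ?thesis by blast
    next
      case 2
      have "3*q^n - a = q^n * 1" using c 2 by simp
      then have "a = q^n*2 \<and> 3*q^n - a = q^n*1 \<and> \<not> q dvd 2 \<and>
           1+0+0 = (1::nat) \<and> [1 * 2^1 = (-1)^0 * 2^0 * 2] (mod q)"
        using c 2 nd2 by simp
      then show ?thesis by blast
    qed
  qed
qed

theorem lemma4p11:
  fixes q :: int and n k :: nat and a :: "nat \<Rightarrow> int"
  assumes "prime q" and "odd q" and "n \<ge> 1"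
    and "odd k"
    and "\<forall>j\<in>{1..k}. 1 \<le> a j \<and> a j < 3 * q ^ n"
    and "(\<Prod>j=1..k. a j) = (\<Prod>j=1..k. 3 * q ^ n - a j)"
  shows "\<exists>m::int. pow2_int_cong q m (neg_one_pow (m + 1))"
proof -
  define Q :: "nat \<Rightarrow> nat \<Rightarrow> int \<Rightarrow> int \<Rightarrow> nat \<Rightarrow> nat \<Rightarrow> nat \<Rightarrow> bool" where
    "Q = (\<lambda>j e u w p r z. a j = q^e*u \<and> 3*q^n - a j = q^e*w \<and> \<not> q dvd u \<and>
           p+r+z = (1::nat) \<and> [w * 2^p = (-1)^z * 2^r * u] (mod q))"
  have ex: "\<forall>j. \<exists>t. j \<in> {1..k} \<longrightarrow> Q j (fst t) (fst (snd t)) (fst (snd (snd t)))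
      (fst (snd (snd (snd t)))) (fst (snd (snd (snd (snd t))))) (snd (snd (snd (snd (snd t)))))"
  proof
    fix j
    show "\<exists>t. j \<in> {1..k} \<longrightarrow> Q j (fst t) (fst (snd t)) (fst (snd (snd t)))
      (fst (snd (snd (snd t)))) (fst (snd (snd (snd (snd t))))) (snd (snd (snd (snd (snd t)))))"
    proof (cases "j \<in> {1..k}")
      case True
      have "1 \<le> a j" "a j < 3 * q ^ n" using True assms(5) by auto
      then have "\<exists>e u w p r z. a j = q^e*u \<and> 3*q^n - a j = q^e*w \<and> \<not> q dvd u \<and>
           p+r+z = (1::nat) \<and> [w * 2^p = (-1)^z * 2^r * u] (mod q)"
        by (rule perj[OF assms(1,2,3)])
      then obtain e u w p r z where "a j = q^e*u \<and> 3*q^n - a j = q^e*w \<and> \<not> q dvd u \<and>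
           p+r+z = (1::nat) \<and> [w * 2^p = (-1)^z * 2^r * u] (mod q)" by (elim exE)
      then have "Q j e u w p r z" unfolding Q_def by simp
      then show ?thesis by (intro exI[of _ "(e,u,w,p,r,z)"]) simp
    next
      case False
      then show ?thesis by (intro exI[of _ "undefined"] impI) (erule notE)
    qed
  qed
  from choice[OF ex] obtain T where T: "\<forall>j. j \<in> {1..k} \<longrightarrow> Q j (fst (T j)) (fst (snd (T j))) (fst (snd (snd (T j))))
      (fst (snd (snd (snd (T j))))) (fst (snd (snd (snd (snd (T j)))))) (snd (snd (snd (snd (snd (T j))))))" ..
  define E where "E j = fst (T j)" for j
  define U where "U j = fst (snd (T j))" for j
  define W where "W j = fst (snd (snd (T j)))" for j
  define P where "P j = fst (snd (snd (snd (T j))))" for j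
  define R where "R j = fst (snd (snd (snd (snd (T j)))))" for j
  define Z where "Z j = snd (snd (snd (snd (snd (T j)))))" for j
  have H: "(a j = q^E j*U j \<and> 3*q^n - a j = q^E j*W j \<and> \<not> q dvd U j \<and>
           P j+R j+Z j = (1::nat) \<and> [W j * 2^P j = (-1)^Z j * 2^R j * U j] (mod q))"
    if "j \<in> {1..k}" for j
  proof -
    have "Q j (E j) (U j) (W j) (P j) (R j) (Z j)"
      using T that unfolding E_def U_def W_def P_def R_def Z_def by blast
    then show ?thesis unfolding Q_def by simp
  qed
  define A where "A = {1..k}"
  have q1: "q > 1" using assms(1) prime_gt_1_int by blast
  have pa: "(\<Prod>j\<in>A. a j) = q^(\<Sum>j\<in>A. E j) * (\<Prod>j\<in>A. U j)"
  proof -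
    have "(\<Prod>j\<in>A. a j) = (\<Prod>j\<in>A. q^E j * U j)"
      using H unfolding A_def by (intro prod.cong refl) blast
    then show ?thesis by (simp add: prod.distrib power_sum)
  qed
  have pb: "(\<Prod>j\<in>A. 3*q^n - a j) = q^(\<Sum>j\<in>A. E j) * (\<Prod>j\<in>A. W j)"
  proof -
    have "(\<Prod>j\<in>A. 3*q^n - a j) = (\<Prod>j\<in>A. q^E j * W j)"
      using H unfolding A_def by (intro prod.cong refl) blast
    then show ?thesis by (simp add: prod.distrib power_sum)
  qed
  have UW: "(\<Prod>j\<in>A. U j) = (\<Prod>j\<in>A. W j)"
  proof -
    have "q^(\<Sum>j\<in>A. E j) * (\<Prod>j\<in>A. U j) = q^(\<Sum>j\<in>A. E j) * (\<Prod>j\<in>A. W j)"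
      using pa pb assms(6) unfolding A_def by metis
    moreover have "q^(\<Sum>j\<in>A. E j) \<noteq> 0" using q1 by simp
    ultimately show ?thesis using q1 by auto
  qed
  have cp: "[(\<Prod>j\<in>A. W j * 2^P j) = (\<Prod>j\<in>A. (-1)^Z j * 2^R j * U j)] (mod q)"
    using H unfolding A_def by (intro cong_prod) blast
  define SP where "SP = (\<Sum>j\<in>A. P j)"
  define SR where "SR = (\<Sum>j\<in>A. R j)"
  define SZ where "SZ = (\<Sum>j\<in>A. Z j)"
  define X where "X = (\<Prod>j\<in>A. U j)"
  have cp2: "[2^SP * X = ((-1)^SZ * 2^SR) * X] (mod q)"
  proof -
    have "(\<Prod>j\<in>A. W j * 2^P j) = 2^SP * X"
      using UW by (simp add: prod.distrib power_sum SP_def X_def mult.commute)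
    moreover have "(\<Prod>j\<in>A. (-1)^Z j * 2^R j * U j) = ((-1)^SZ * 2^SR) * X"
      by (simp add: prod.distrib power_sum SR_def SZ_def X_def)
    ultimately show ?thesis using cp by simp
  qed
  have cX: "coprime X q"
    unfolding X_def A_def
  proof (rule prod_coprime_left)
    fix j assume "j \<in> {1..k}"
    then have "\<not> q dvd U j" using H by blast
    then show "coprime (U j) q" using assms(1) by (simp add: prime_imp_coprime coprime_commute)
  qed
  have c3: "[2^SP = (-1)^SZ * 2^SR] (mod q)" using cp2 cX cong_mult_rcancel by blast
  have sumk: "SP + SR + SZ = k"
  proof -
    have "SP + SR + SZ = (\<Sum>j\<in>A. P j + R j + Z j)"
      by (simp add: SP_def SR_def SZ_def sum.distrib)
    also have "\<dots> = (\<Sum>j\<in>A. 1)" using H unfolding A_def by simp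
    finally show ?thesis unfolding A_def by simp
  qed
  have c2: "coprime (2::int) q"
  proof -
    have "\<not> q dvd 2"
    proof
      assume "q dvd 2" then have "q \<le> 2" by (rule zdvd_imp_le) simp
      then have "q = 2" using q1 by linarith
      then show False using assms(2) by simp
    qed
    then show ?thesis using assms(1,2) by (simp add: prime_imp_coprime coprime_commute)
  qed
  have cpow: "\<And>x. coprime ((2::int)^x) q" using c2 by simp
  define c :: int where "c = (-1)^SZ"
  have cc: "c * c = 1" unfolding c_def by (simp add: power_mult_distrib[symmetric])
  define m :: int where "m = int SR - int SP"
  have nc: "neg_one_pow (m + 1) = c"
  proof -
    have e1: "m + 1 = (int k + 1) - 2*int SP - int SZ" using sumk unfolding m_def by linarith
    have "odd (int k)" using assms(4) by simp
    then have "even (m+1) \<longleftrightarrow> even (int SZ)" unfolding e1 by presburger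
    then show ?thesis unfolding neg_one_pow_def c_def by simp
  qed
  show ?thesis
  proof (intro exI[of _ m])
    show "pow2_int_cong q m (neg_one_pow (m + 1))"
    proof (cases "SP \<le> SR")
      case True
      have e: "2^SR = 2^SP * (2::int)^(SR - SP)" using True by (simp add: power_add[symmetric])
      have "[2^SP * 1 = 2^SP * (c * 2^(SR-SP))] (mod q)" using c3 e unfolding c_def by (simp add: ac_simps)
      then have "[1 = c * 2^(SR-SP)] (mod q)" using cpow cong_mult_lcancel by metis
      then have "[c * 1 = c * (c * 2^(SR-SP))] (mod q)" by (rule cong_scalar_left)
      then have "[2^(SR-SP) = c] (mod q)" using cc by (simp add: mult.assoc[symmetric] cong_sym)
      moreover have "nat m = SR - SP" "0 \<le> m" using True unfolding m_def by auto
      ultimately show ?thesis unfolding pow2_int_cong_def nc by simp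
    next
      case False
      have e: "2^SP = 2^SR * (2::int)^(SP - SR)" using False by (simp add: power_add[symmetric])
      have "[2^SR * 2^(SP-SR) = 2^SR * c] (mod q)" using c3 e unfolding c_def by (simp add: ac_simps)
      then have "[2^(SP-SR) = c] (mod q)" using cpow cong_mult_lcancel by metis
      then have "[c * 2^(SP-SR) = c * c] (mod q)" by (rule cong_scalar_left)
      then have "[c * 2^(SP-SR) = 1] (mod q)" using cc by simp
      moreover have "nat (-m) = SP - SR" "\<not> 0 \<le> m" using False unfolding m_def by auto
      ultimately show ?thesis unfolding pow2_int_cong_def nc by simp
    qed
  qed
qed

end
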